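(* Let $n\ge1$, $m\ge0$, $\Phi(\mathbf t;\mathbf y)=\sum_{k=0}^m t_k p_{k+1}(\mathbf y)$, and let $\mathbf u(\mathbf t)=(u_1,\dots,u_n)$ be a $C^1$ map on an open set of parameters $\mathbf t=(t_0,\dots,t_m)$ such that $\frac{\partial\Phi}{\partial y_i}(\mathbf t;\mathbf u(\mathbf t))=0$ for $i=1,\dots,n$. Assume $\Phi_{i,j}:=\frac{\partial^2\Phi}{\partial y_i\partial y_j}(\mathbf t;\mathbf u(\mathbf t))\neq0$ for all $i,j\in\{1,\dots,n\}$ with $i+j>n$. Then for every $k=1,\dots,m$, \[ \frac{\partial \mathbf u}{\partial t_k}={\sf A}_k(\mathbf u)\,\frac{\partial \mathbf u}{\partial t_0}, \] where ${\sf A}_k(\mathbf u)$ is the upper triangular Toeplitz $n\times n$ matrix with entries $({\sf A}_k)_{i,j}=p_{k-j+i}(\mathbf u)$ for $i\le j$ and $({\sf A}_k)_{i,j}=0$ for $i>j$. In particular ${\sf A}_1$ is the Jordan block with $u_1$ on the diagonal and $1$ on the first superdiagonal.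
   Context: The elementary Schur polynomials $p_k(\mathbf y)$, $\mathbf y=(y_1,\dots,y_n)$, are defined by $\exp\big(\sum_{i=1}^n y_i z^i\big)=\sum_{k\ge 0}p_k(\mathbf y)z^k$, with the convention $p_k=0$ for $k<0$ (so $p_0=1$, $p_1=y_1$). *)

theory Defs
  imports "HOL-Analysis.Analysis" "HOL-Computational_Algebra.Formal_Power_Series"
begin

definition schur_p :: "nat \<Rightarrow> int \<Rightarrow> (nat \<Rightarrow> real) \<Rightarrow> real" where
  "schur_p n k y = (if k < 0 then 0 else
     fps_nth (fps_exp 1 oo Abs_fps (\<lambda>i. if 1 \<le> i \<and> i \<le> n then y i else 0)) (nat k))"

definition pdy :: "((nat \<Rightarrow> real) \<Rightarrow> real) \<Rightarrow> nat \<Rightarrow> (nat \<Rightarrow> real) \<Rightarrow> real" where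
  "pdy f i y = deriv (\<lambda>s. f (y(i := y i + s))) 0"

text \<open>Phi(t;y) = sum_{k=0}^m t_k p_{k+1}(y); the parameter vector t lives in real^'p,
  whose coordinates are labelled t_0..t_m via the bijection e :: nat => 'p.\<close>
definition Phi :: "nat \<Rightarrow> nat \<Rightarrow> (nat \<Rightarrow> 'p::finite) \<Rightarrow> real^'p \<Rightarrow> (nat \<Rightarrow> real) \<Rightarrow> real" where
  "Phi n m e t y = (\<Sum>k=0..m. t $ (e k) * schur_p n (int k + 1) y)"

definition toeplitzA :: "nat \<Rightarrow> nat \<Rightarrow> (nat \<Rightarrow> real) \<Rightarrow> nat \<Rightarrow> nat \<Rightarrow> real" where
  "toeplitzA n k y i j = (if i \<le> j then schur_p n (int k - int j + int i) y else 0)"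

end

theory Submission imports Defs begin

definition Yf :: "nat \<Rightarrow> (nat \<Rightarrow> real) \<Rightarrow> real fps" where
  "Yf n y = Abs_fps (\<lambda>i. if 1 \<le> i \<and> i \<le> n then y i else 0)"

lemma schur_nat: "schur_p n (int K) y = fps_nth (fps_exp 1 oo Yf n y) K"
  by (simp add: schur_p_def Yf_def)

lemma schur_neg: "k < 0 \<Longrightarrow> schur_p n k y = 0"
  by (simp add: schur_p_def)

lemma schur_0: "schur_p n 0 y = 1"
  using schur_nat[of n 0 y] by simp

lemma schur_rec_nat:
  assumes "K \<ge> 1"
  shows "real K * schur_p n (int K) y = (\<Sum>i=1..n. real i * y i * schur_p n (int K - int i) y)"
proof -
  define Y where "Y = Yf n y"
  define E where "E = fps_exp (1::real) oo Y"
  have Y0: "fps_nth Y 0 = 0" by (simp add: Y_def Yf_def)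
  have d: "fps_deriv E = E * fps_deriv Y"
    unfolding E_def using fps_compose_deriv[OF Y0, of "fps_exp 1"] by simp
  have "real K * fps_nth E K = fps_nth (fps_deriv E) (K - 1)" using assms by simp
  also have "\<dots> = (\<Sum>a=0..K-1. fps_nth E a * (real (K - a) * fps_nth Y (K - a)))"
    unfolding d fps_mult_nth
  proof (intro sum.cong refl)
    fix a assume "a \<in> {0..K-1}"
    then have "K - 1 - a + 1 = K - a" using assms by auto
    then show "fps_nth E a * fps_nth (fps_deriv Y) (K - 1 - a) = fps_nth E a * (real (K - a) * fps_nth Y (K - a))"
      by (simp add: fps_deriv_nth)
  qed
  also have "\<dots> = (\<Sum>i=1..K. real i * fps_nth Y i * fps_nth E (K - i))"
  proof (rule sum.reindex_bij_witness[of _ "\<lambda>i. K - i" "\<lambda>a. K - a"])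
    fix a assume a: "a \<in> {0..K-1}"
    show "K - (K - a) = a" using a assms by simp
    show "K - a \<in> {1..K}" using a assms by simp
    have "K - (K - a) = a" using a assms by simp
    then show "real (K - a) * fps_nth Y (K - a) * fps_nth E (K - (K - a)) = fps_nth E a * (real (K - a) * fps_nth Y (K - a))"
      by simp
  next
    fix i assume i: "i \<in> {1..K}"
    show "K - (K - i) = i" using i by simp
    show "K - i \<in> {0..K-1}" using i by auto
  qed
  also have "\<dots> = (\<Sum>i\<in>{1..K} \<inter> {1..n}. real i * fps_nth Y i * fps_nth E (K - i))"
    by (rule sum.mono_neutral_right) (auto simp: Y_def Yf_def)
  also have "\<dots> = (\<Sum>i\<in>{1..K} \<inter> {1..n}. real i * y i * schur_p n (int K - int i) y)"
  proof (rule sum.cong[OF refl])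
    fix i assume i: "i \<in> {1..K} \<inter> {1..n}"
    then have "int K - int i = int (K - i)" by auto
    then have "schur_p n (int K - int i) y = fps_nth E (K - i)"
      by (simp only: schur_nat E_def Y_def)
    moreover have "fps_nth Y i = y i" using i by (simp add: Y_def Yf_def)
    ultimately show "real i * fps_nth Y i * fps_nth E (K - i) = real i * y i * schur_p n (int K - int i) y"
      by simp
  qed
  also have "\<dots> = (\<Sum>i\<in>{1..n}. real i * y i * schur_p n (int K - int i) y)"
    by (rule sum.mono_neutral_left) (auto simp: schur_neg)
  finally show ?thesis by (simp add: schur_nat E_def Y_def)
qed

lemma schur_rec:
  "of_int k * schur_p n k y = (\<Sum>i=1..n. real i * y i * schur_p n (k - int i) y)"
proof (cases "k \<ge> 1")
  case True
  then have K: "k = int (nat k)" "nat k \<ge> 1" by auto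
  show ?thesis using schur_rec_nat[OF K(2), of n y] K(1) by simp
next
  case False
  then show ?thesis by (cases "k < 0") (auto simp: schur_neg intro!: sum.neutral)
qed

lemma schur_has_derivative:
  fixes y :: "'a::real_normed_vector \<Rightarrow> nat \<Rightarrow> real"
  assumes dy: "\<And>i. i \<in> {1..n} \<Longrightarrow> ((\<lambda>x. y x i) has_derivative Dy i) (at x0 within S)"
  shows "((\<lambda>x. schur_p n k (y x)) has_derivative
           (\<lambda>h. \<Sum>j=1..n. schur_p n (k - int j) (y x0) * Dy j h)) (at x0 within S)"
proof (induction "nat k" arbitrary: k rule: less_induct)
  case less
  show ?case
  proof (cases "k \<ge> 1")
    case False
    have z: "(\<lambda>h. \<Sum>j=1..n. schur_p n (k - int j) (y x0) * Dy j h) = (\<lambda>h. 0)"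
      using False by (auto simp: schur_neg intro!: sum.neutral)
    show ?thesis
    proof (cases "k = 0")
      case True
      show ?thesis unfolding z unfolding True schur_0 by simp
    next
      case False2: False
      with False have "k < 0" by simp
      then show ?thesis unfolding z by (simp add: schur_neg)
    qed
  next
    case True
    define y0 where "y0 = y x0"
    have IH: "((\<lambda>x. schur_p n (k - int i) (y x)) has_derivative
           (\<lambda>h. \<Sum>j=1..n. schur_p n (k - int i - int j) (y x0) * Dy j h)) (at x0 within S)"
      if "i \<in> {1..n}" for i
      using less[of "k - int i"] that True by auto
    have eqf: "(\<lambda>x. schur_p n k (y x)) =
       (\<lambda>x. (1 / of_int k) * (\<Sum>i=1..n. (real i * y x i) * schur_p n (k - int i) (y x)))"
    proof
      fix x
      have "of_int k * schur_p n k (y x) = (\<Sum>i=1..n. real i * y x i * schur_p n (k - int i) (y x))"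
        by (rule schur_rec)
      then show "schur_p n k (y x) = (1 / of_int k) * (\<Sum>i=1..n. (real i * y x i) * schur_p n (k - int i) (y x))"
        using True by (simp add: field_simps)
    qed
    have der: "((\<lambda>x. (1 / of_int k) * (\<Sum>i=1..n. (real i * y x i) * schur_p n (k - int i) (y x)))
       has_derivative (\<lambda>h. (1 / of_int k) * (\<Sum>i=1..n. (real i * y x0 i) *
            (\<Sum>j=1..n. schur_p n (k - int i - int j) (y x0) * Dy j h)
            + (real i * Dy i h) * schur_p n (k - int i) (y x0)))) (at x0 within S)"
      by (intro has_derivative_mult_right has_derivative_sum has_derivative_mult IH dy) auto
    have lin: "(\<lambda>h. (1 / of_int k) * (\<Sum>i=1..n. (real i * y x0 i) *
            (\<Sum>j=1..n. schur_p n (k - int i - int j) (y x0) * Dy j h)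
            + (real i * Dy i h) * schur_p n (k - int i) (y x0))) =
       (\<lambda>h. \<Sum>j=1..n. schur_p n (k - int j) (y x0) * Dy j h)"
    proof
      fix h
      have A: "(\<Sum>i=1..n. (real i * y x0 i) * (\<Sum>j=1..n. schur_p n (k - int i - int j) (y x0) * Dy j h))
          = (\<Sum>j=1..n. (of_int (k - int j) * schur_p n (k - int j) (y x0)) * Dy j h)"
      proof -
        have "(\<Sum>i=1..n. (real i * y x0 i) * (\<Sum>j=1..n. schur_p n (k - int i - int j) (y x0) * Dy j h))
            = (\<Sum>i=1..n. \<Sum>j=1..n. (real i * y x0 i * schur_p n (k - int j - int i) (y x0)) * Dy j h)"
          by (simp add: sum_distrib_left mult_ac diff_diff_eq add.commute)
        also have "\<dots> = (\<Sum>j=1..n. \<Sum>i=1..n. (real i * y x0 i * schur_p n (k - int j - int i) (y x0)) * Dy j h)"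
          by (rule sum.swap)
        also have "\<dots> = (\<Sum>j=1..n. (\<Sum>i=1..n. real i * y x0 i * schur_p n (k - int j - int i) (y x0)) * Dy j h)"
          by (simp add: sum_distrib_right)
        also have "\<dots> = (\<Sum>j=1..n. (of_int (k - int j) * schur_p n (k - int j) (y x0)) * Dy j h)"
          by (simp only: schur_rec)
        finally show ?thesis .
      qed
      have B: "(\<Sum>i=1..n. (real i * Dy i h) * schur_p n (k - int i) (y x0))
           = (\<Sum>j=1..n. (of_int (int j) * schur_p n (k - int j) (y x0)) * Dy j h)"
        by (simp add: mult_ac)
      have "(\<Sum>i=1..n. (real i * y x0 i) * (\<Sum>j=1..n. schur_p n (k - int i - int j) (y x0) * Dy j h)
            + (real i * Dy i h) * schur_p n (k - int i) (y x0))
          = (\<Sum>j=1..n. of_int k * (schur_p n (k - int j) (y x0) * Dy j h))"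
        unfolding sum.distrib A B by (simp add: sum.distrib[symmetric] algebra_simps)
      also have "\<dots> = of_int k * (\<Sum>j=1..n. schur_p n (k - int j) (y x0) * Dy j h)"
        by (simp add: sum_distrib_left)
      finally show "(1 / of_int k) * (\<Sum>i=1..n. (real i * y x0 i) *
            (\<Sum>j=1..n. schur_p n (k - int i - int j) (y x0) * Dy j h)
            + (real i * Dy i h) * schur_p n (k - int i) (y x0)) =
          (\<Sum>j=1..n. schur_p n (k - int j) (y x0) * Dy j h)"
        using True by simp
    qed
    show ?thesis unfolding eqf using der lin by (rule has_derivative_eq_rhs)
  qed
qed

lemma sum_lessThan_zero_tail:
  fixes G :: "nat \<Rightarrow> real"
  assumes "a \<le> b" "\<And>d. a \<le> d \<Longrightarrow> d < b \<Longrightarrow> G d = 0"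
  shows "(\<Sum>d<b. G d) = (\<Sum>d<a. G d)"
proof -
  have eq: "{..<b} = {..<a} \<union> {a..<b}" using assms(1) by auto
  have "sum G ({..<a} \<union> {a..<b}) = sum G {..<a} + sum G {a..<b}"
    by (rule sum.union_disjoint) auto
  then have "(\<Sum>d<b. G d) = (\<Sum>d<a. G d) + (\<Sum>d\<in>{a..<b}. G d)"
    by (simp only: eq)
  also have "(\<Sum>d\<in>{a..<b}. G d) = 0" using assms(2) by (intro sum.neutral) auto
  finally show ?thesis by simp
qed

lemma toeplitz_reindex:
  fixes F p :: "int \<Rightarrow> real"
  assumes "l \<in> {1..n}"
  shows "(\<Sum>j=1..n. F (int i + int j) * (if j \<le> l then p (int k - int l + int j) else 0))
       = (\<Sum>d<l. F (int i + int l - int d) * p (int k - int d))"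
proof -
  have "(\<Sum>j=1..n. F (int i + int j) * (if j \<le> l then p (int k - int l + int j) else 0))
      = (\<Sum>j=1..l. F (int i + int j) * p (int k - int l + int j))"
    using assms by (intro sum.mono_neutral_cong_right) auto
  also have "\<dots> = (\<Sum>d<l. F (int i + int l - int d) * p (int k - int d))"
  proof (rule sum.reindex_bij_witness[of _ "\<lambda>d. l - d" "\<lambda>j. l - j"])
    fix d assume d: "d \<in> {..<l}"
    show "l - (l - d) = d" using d by auto
    show "l - d \<in> {1..l}" using d by auto
  next
    fix j assume j: "j \<in> {1..l}"
    show "l - (l - j) = j" using j by auto
    show "l - j \<in> {..<l}" using j by auto
    have "int (l - j) = int l - int j" using j by auto
    then show "F (int i + int l - int (l - j)) * p (int k - int (l - j)) =
               F (int i + int j) * p (int k - int l + int j)"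
      by (simp add: algebra_simps)
  qed
  finally show ?thesis .
qed

lemma alg_main:
  fixes F p :: "int \<Rightarrow> real" and v w :: "nat \<Rightarrow> real" and n k :: nat
  assumes Fz: "\<And>s. 1 \<le> s \<Longrightarrow> s \<le> int n \<Longrightarrow> F s = 0"
    and Fn: "F (int n + 1) \<noteq> 0"
    and hv: "\<And>i. i \<in> {1..n} \<Longrightarrow> (if i = 1 then 1 else 0) + (\<Sum>j=1..n. F (int i + int j) * v j) = 0"
    and hw: "\<And>i. i \<in> {1..n} \<Longrightarrow> p (int k + 1 - int i) + (\<Sum>j=1..n. F (int i + int j) * w j) = 0"
  shows "\<forall>i\<in>{1..n}. w i = (\<Sum>j=1..n. (if i \<le> j then p (int k - int j + int i) else 0) * v j)"
proof -
  define a where "a i = (\<Sum>j=1..n. (if i \<le> j then p (int k - int j + int i) else 0) * v j)" for i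
  have ha: "p (int k + 1 - int i) + (\<Sum>j=1..n. F (int i + int j) * a j) = 0" if i: "i \<in> {1..n}" for i
  proof -
    have "(\<Sum>j=1..n. F (int i + int j) * a j)
        = (\<Sum>l=1..n. v l * (\<Sum>j=1..n. F (int i + int j) * (if j \<le> l then p (int k - int l + int j) else 0)))"
      unfolding a_def by (simp add: sum_distrib_left sum_distrib_right mult_ac) (rule sum.swap)
    also have "\<dots> = (\<Sum>l=1..n. v l * (\<Sum>d<i. F (int i + int l - int d) * p (int k - int d)))"
    proof (intro sum.cong refl)
      fix l assume l: "l \<in> {1..n}"
      have "(\<Sum>j=1..n. F (int i + int j) * (if j \<le> l then p (int k - int l + int j) else 0))
          = (\<Sum>d<l. F (int i + int l - int d) * p (int k - int d))"
        using l by (rule toeplitz_reindex)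
      also have "\<dots> = (\<Sum>d<i. F (int i + int l - int d) * p (int k - int d))"
      proof (cases "i \<le> l")
        case True
        show ?thesis using True l i by (intro sum_lessThan_zero_tail) (auto intro!: Fz)
      next
        case False
        show ?thesis using False l i by (intro sum_lessThan_zero_tail[symmetric]) (auto intro!: Fz)
      qed
      finally show "v l * (\<Sum>j=1..n. F (int i + int j) * (if j \<le> l then p (int k - int l + int j) else 0))
          = v l * (\<Sum>d<i. F (int i + int l - int d) * p (int k - int d))" by simp
    qed
    also have "\<dots> = (\<Sum>d<i. p (int k - int d) * (\<Sum>l=1..n. F (int (i - d) + int l) * v l))"
    proof -
      have "(\<Sum>l=1..n. v l * (\<Sum>d<i. F (int i + int l - int d) * p (int k - int d)))
          = (\<Sum>d<i. \<Sum>l=1..n. p (int k - int d) * (F (int i + int l - int d) * v l))"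
        by (simp add: sum_distrib_left mult_ac) (rule sum.swap)
      also have "\<dots> = (\<Sum>d<i. p (int k - int d) * (\<Sum>l=1..n. F (int (i - d) + int l) * v l))"
        by (intro sum.cong refl) (auto simp: sum_distrib_left of_nat_diff algebra_simps)
      finally show ?thesis .
    qed
    also have "\<dots> = (\<Sum>d<i. p (int k - int d) * - (if i - d = 1 then 1 else 0))"
    proof (intro sum.cong refl)
      fix d assume "d \<in> {..<i}"
      then have "i - d \<in> {1..n}" using i by auto
      from hv[OF this] have "(\<Sum>l=1..n. F (int (i - d) + int l) * v l) = - (if i - d = 1 then 1 else 0)"
        by linarith
      then show "p (int k - int d) * (\<Sum>l=1..n. F (int (i - d) + int l) * v l) =
            p (int k - int d) * - (if i - d = 1 then 1 else 0)" by simp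
    qed
    also have "\<dots> = (\<Sum>d<i. if d = i - 1 then - p (int k + 1 - int i) else 0)"
    proof (intro sum.cong refl)
      fix d assume "d \<in> {..<i}"
      then show "p (int k - int d) * - (if i - d = 1 then 1 else 0) = (if d = i - 1 then - p (int k + 1 - int i) else 0)"
        using i by (auto simp: of_nat_diff algebra_simps)
    qed
    also have "\<dots> = - p (int k + 1 - int i)" using i by (simp add: sum.delta)
    finally show ?thesis by simp
  qed
  define x where "x j = w j - a j" for j
  have hx: "(\<Sum>j=1..n. F (int i + int j) * x j) = 0" if "i \<in> {1..n}" for i
    using hw[OF that] ha[OF that] unfolding x_def
    by (simp add: right_diff_distrib sum_subtractf)
  have ind: "\<forall>j\<in>{1..n}. n < j + r \<longrightarrow> x j = 0" for r
  proof (induction r)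
    case 0 then show ?case by auto
  next
    case (Suc r)
    show ?case
    proof (intro ballI impI)
      fix j assume j: "j \<in> {1..n}" and jr: "n < j + Suc r"
      show "x j = 0"
      proof (cases "n < j + r")
        case True then show ?thesis using Suc.IH j by auto
      next
        case False
        then have jeq: "j + r = n" using jr by auto
        have "r + 1 \<in> {1..n}" using j jeq by auto
        from hx[OF this] have "(\<Sum>j'=1..n. F (int (r+1) + int j') * x j') = 0" .
        moreover have "(\<Sum>j'=1..n. F (int (r+1) + int j') * x j') = (\<Sum>j'=1..n. if j' = j then F (int n + 1) * x j else 0)"
        proof (intro sum.cong refl)
          fix j' assume j': "j' \<in> {1..n}"
          show "F (int (r+1) + int j') * x j' = (if j' = j then F (int n + 1) * x j else 0)"
          proof (cases "j' < j")
            case True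
            then have "F (int (r+1) + int j') = 0" using jeq j' by (intro Fz) auto
            then show ?thesis using True by auto
          next
            case False
            show ?thesis
            proof (cases "j' = j")
              case True
              have "int (r+1) + int j' = int n + 1" using True jeq by simp
              then show ?thesis using True by (simp only: if_True refl)
            next
              case False2: False
              then have "x j' = 0" using Suc.IH j' False jeq by auto
              then show ?thesis using False2 by simp
            qed
          qed
        qed
        ultimately have "F (int n + 1) * x j = 0" using j by (simp add: sum.delta)
        then show ?thesis using Fn by simp
      qed
    qed
  qed
  show ?thesis
  proof
    fix i assume i: "i \<in> {1..n}"
    have "x i = 0" using ind[of "n"] i by auto
    then show "w i = (\<Sum>j=1..n. (if i \<le> j then p (int k - int j + int i) else 0) * v j)"
      unfolding x_def a_def by simp
  qed
qed


lemma pdy_lin: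
  fixes c :: "'q \<Rightarrow> real" and a :: "'q \<Rightarrow> int"
  assumes "finite Q" "i \<in> {1..n}"
  shows "pdy (\<lambda>y. \<Sum>q\<in>Q. c q * schur_p n (a q) y) i y = (\<Sum>q\<in>Q. c q * schur_p n (a q - int i) y)"
proof -
  define g where "g s = y(i := y i + s)" for s :: real
  have g0: "g 0 = y" by (simp add: g_def)
  have dg: "((\<lambda>s. g s j) has_derivative (\<lambda>h. if j = i then h else 0)) (at 0 within UNIV)" for j
    by (cases "j = i") (auto simp: g_def intro!: derivative_eq_intros)
  have d: "((\<lambda>s. \<Sum>q\<in>Q. c q * schur_p n (a q) (g s)) has_derivative
      (\<lambda>h. \<Sum>q\<in>Q. c q * (\<Sum>j=1..n. schur_p n (a q - int j) (g 0) * (if j = i then h else 0))))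
      (at 0 within UNIV)"
    by (intro has_derivative_sum has_derivative_mult_right schur_has_derivative dg)
  have e: "(\<lambda>h. \<Sum>q\<in>Q. c q * (\<Sum>j=1..n. schur_p n (a q - int j) (g 0) * (if j = i then h else 0)))
      = (\<lambda>h. (\<Sum>q\<in>Q. c q * schur_p n (a q - int i) y) * h)"
  proof
    fix h
    have "(\<Sum>j=1..n. schur_p n (a q - int j) (g 0) * (if j = i then h else 0)) = schur_p n (a q - int i) y * h" for q
    proof -
      have "(\<Sum>j=1..n. schur_p n (a q - int j) (g 0) * (if j = i then h else 0))
           = (\<Sum>j=1..n. if j = i then schur_p n (a q - int i) y * h else 0)"
        by (intro sum.cong refl) (auto simp: g0)
      also have "\<dots> = schur_p n (a q - int i) y * h" using assms(2) by (simp add: sum.delta)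
      finally show ?thesis .
    qed
    then show "(\<Sum>q\<in>Q. c q * (\<Sum>j=1..n. schur_p n (a q - int j) (g 0) * (if j = i then h else 0)))
      = (\<Sum>q\<in>Q. c q * schur_p n (a q - int i) y) * h"
      by (simp add: sum_distrib_left sum_distrib_right mult_ac)
  qed
  have "((\<lambda>s. \<Sum>q\<in>Q. c q * schur_p n (a q) (g s)) has_field_derivative (\<Sum>q\<in>Q. c q * schur_p n (a q - int i) y)) (at 0)"
  proof -
    from d have "((\<lambda>s. \<Sum>q\<in>Q. c q * schur_p n (a q) (g s)) has_derivative
       (\<lambda>h. (\<Sum>q\<in>Q. c q * schur_p n (a q - int i) y) * h)) (at 0)" unfolding e by simp
    then show ?thesis unfolding has_field_derivative_def by simp
  qed
  then have "deriv (\<lambda>s. \<Sum>q\<in>Q. c q * schur_p n (a q) (g s)) 0 = (\<Sum>q\<in>Q. c q * schur_p n (a q - int i) y)"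
    by (rule DERIV_imp_deriv)
  then show ?thesis unfolding pdy_def g_def .
qed

definition Fh :: "nat \<Rightarrow> nat \<Rightarrow> (nat \<Rightarrow> 'p::finite) \<Rightarrow> real^'p \<Rightarrow> (nat \<Rightarrow> real) \<Rightarrow> int \<Rightarrow> real" where
  "Fh n m e t y s = (\<Sum>q=0..m. t $ (e q) * schur_p n (int q + 1 - s) y)"

lemma Phi_eta: "Phi n m e t = (\<lambda>y. \<Sum>q=0..m. t $ (e q) * schur_p n (int q + 1) y)"
  by (simp add: Phi_def fun_eq_iff)

lemma pdy_Phi: "i \<in> {1..n} \<Longrightarrow> pdy (Phi n m e t) i y = Fh n m e t y (int i)"
  unfolding Phi_eta Fh_def by (subst pdy_lin) auto

lemma pdy_pdy_Phi:
  assumes "i \<in> {1..n}" "j \<in> {1..n}"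
  shows "pdy (\<lambda>y. pdy (Phi n m e t) j y) i y = Fh n m e t y (int i + int j)"
proof -
  have "(\<lambda>y. pdy (Phi n m e t) j y) = (\<lambda>y. \<Sum>q=0..m. t $ (e q) * schur_p n (int q + 1 - int j) y)"
    using assms(2) by (simp add: pdy_Phi Fh_def)
  then show ?thesis using assms(1) by (simp add: pdy_lin Fh_def algebra_simps)
qed

lemma deriv_eq:
  fixes t :: "real^'p::finite" and D :: "nat \<Rightarrow> real^'p \<Rightarrow> ((real^'p) \<Rightarrow>\<^sub>L real)"
    and u :: "real^'p \<Rightarrow> nat \<Rightarrow> real"
  assumes inj: "inj_on e {..m}" and "open U" and tU: "t \<in> U"
    and du: "\<And>j. j \<in> {1..n} \<Longrightarrow> ((\<lambda>t. u t j) has_derivative blinfun_apply (D j t)) (at t)"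
    and crit: "\<forall>t\<in>U. Fh n m e t (u t) (int i) = 0"
    and kk: "kk \<le> m"
  shows "schur_p n (int kk + 1 - int i) (u t)
     + (\<Sum>j=1..n. Fh n m e t (u t) (int i + int j) * D j t (axis (e kk) 1)) = 0"
proof -
  define G where "G t' = (\<Sum>q=0..m. t' $ (e q) * schur_p n (int q + 1 - int i) (u t'))" for t'
  have dG: "(G has_derivative (\<lambda>h. \<Sum>q=0..m. t $ (e q) *
        (\<Sum>j=1..n. schur_p n (int q + 1 - int i - int j) (u t) * D j t h)
        + h $ (e q) * schur_p n (int q + 1 - int i) (u t))) (at t)"
    unfolding G_def
    by (intro has_derivative_sum has_derivative_mult schur_has_derivative du
        bounded_linear_imp_has_derivative bounded_linear_vec_nth) auto
  have "(G has_derivative (\<lambda>h. 0)) (at t)"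
  proof (rule has_derivative_transform_within_open[OF _ \<open>open U\<close> tU])
    show "((\<lambda>t'. 0) has_derivative (\<lambda>h. 0)) (at t)" by simp
    fix x assume "x \<in> U" then show "0 = G x" using crit by (simp add: G_def Fh_def)
  qed
  from has_derivative_unique[OF dG this]
  have z: "(\<Sum>q=0..m. t $ (e q) * (\<Sum>j=1..n. schur_p n (int q + 1 - int i - int j) (u t) * D j t h)
        + h $ (e q) * schur_p n (int q + 1 - int i) (u t)) = 0" for h
    by (metis (no_types, lifting))
  define h where "h = (axis (e kk) 1 :: real^'p)"
  have hq: "h $ (e q) = (if q = kk then 1 else 0)" if "q \<in> {0..m}" for q
    using inj that kk unfolding h_def axis_def by (auto simp: inj_on_def)
  have "(\<Sum>q=0..m. t $ (e q) * (\<Sum>j=1..n. schur_p n (int q + 1 - int i - int j) (u t) * D j t h)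
        + h $ (e q) * schur_p n (int q + 1 - int i) (u t))
      = (\<Sum>q=0..m. \<Sum>j=1..n. t $ (e q) * schur_p n (int q + 1 - int i - int j) (u t) * D j t h)
        + (\<Sum>q=0..m. if q = kk then schur_p n (int kk + 1 - int i) (u t) else 0)"
  proof -
    have "(\<Sum>q=0..m. h $ (e q) * schur_p n (int q + 1 - int i) (u t))
        = (\<Sum>q=0..m. if q = kk then schur_p n (int kk + 1 - int i) (u t) else 0)"
      by (rule sum.cong) (auto simp: hq)
    then show ?thesis by (simp add: sum.distrib sum_distrib_left mult_ac)
  qed
  also have "(\<Sum>q=0..m. if q = kk then schur_p n (int kk + 1 - int i) (u t) else 0) = schur_p n (int kk + 1 - int i) (u t)"
    using kk by (simp add: sum.delta)
  also have "(\<Sum>q=0..m. \<Sum>j=1..n. t $ (e q) * schur_p n (int q + 1 - int i - int j) (u t) * D j t h)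
      = (\<Sum>j=1..n. Fh n m e t (u t) (int i + int j) * D j t h)"
    unfolding Fh_def by (subst sum.swap) (simp add: sum_distrib_right sum_distrib_left algebra_simps)
  finally show ?thesis using z[of h] unfolding h_def by simp
qed

theorem mainTheorem3:
  fixes n m :: nat
    and e :: "nat \<Rightarrow> 'p::finite"
    and U :: "(real^'p) set"
    and u :: "real^'p \<Rightarrow> nat \<Rightarrow> real"
    and D :: "nat \<Rightarrow> real^'p \<Rightarrow> ((real^'p) \<Rightarrow>\<^sub>L real)"
  assumes "n \<ge> 1"
    and "bij_betw e {..m} UNIV"
    and "open U"
    and C1: "\<forall>i\<in>{1..n}. (\<forall>t\<in>U. ((\<lambda>t. u t i) has_derivative blinfun_apply (D i t)) (at t))
                         \<and> continuous_on U (D i)"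
    and crit: "\<forall>t\<in>U. \<forall>i\<in>{1..n}. pdy (Phi n m e t) i (u t) = 0"
    and nondeg: "\<forall>t\<in>U. \<forall>i\<in>{1..n}. \<forall>j\<in>{1..n}. i + j > n \<longrightarrow>
                   pdy (\<lambda>y. pdy (Phi n m e t) j y) i (u t) \<noteq> 0"
  shows "\<forall>k\<in>{1..m}. \<forall>t\<in>U. \<forall>i\<in>{1..n}.
           D i t (axis (e k) 1) = (\<Sum>j=1..n. toeplitzA n k (u t) i j * D j t (axis (e 0) 1))"
proof (intro ballI)
  fix k t i assume k: "k \<in> {1..m}" and tU: "t \<in> U" and i: "i \<in> {1..n}"
  have inj: "inj_on e {..m}" using assms(2) by (simp add: bij_betw_def)
  have du: "\<And>j. j \<in> {1..n} \<Longrightarrow> ((\<lambda>t. u t j) has_derivative blinfun_apply (D j t)) (at t)"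
    using C1 tU by blast
  have critF: "\<forall>t\<in>U. Fh n m e t (u t) (int i') = 0" if "i' \<in> {1..n}" for i'
    using crit that by (simp add: pdy_Phi)
  define F where "F s = Fh n m e t (u t) s" for s
  define p where "p s = schur_p n s (u t)" for s
  have Fz: "F s = 0" if "1 \<le> s" "s \<le> int n" for s
  proof -
    have "nat s \<in> {1..n}" "s = int (nat s)" using that by auto
    then show ?thesis using critF[of "nat s"] tU unfolding F_def by metis
  qed
  have Fn: "F (int n + 1) \<noteq> 0"
  proof -
    have "1 \<in> {1..n}" "n \<in> {1..n}" using assms(1) by auto
    then have "pdy (\<lambda>y. pdy (Phi n m e t) n y) 1 (u t) \<noteq> 0" using nondeg tU by auto
    then show ?thesis unfolding F_def using \<open>1 \<in> {1..n}\<close> \<open>n \<in> {1..n}\<close>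
      by (simp add: pdy_pdy_Phi add.commute)
  qed
  have hv: "(if i' = 1 then 1 else 0) + (\<Sum>j=1..n. F (int i' + int j) * D j t (axis (e 0) 1)) = 0"
    if "i' \<in> {1..n}" for i'
  proof -
    have "schur_p n (int 0 + 1 - int i') (u t) = (if i' = 1 then 1 else 0)"
      using that by (auto simp: schur_0 schur_neg)
    then show ?thesis
      using deriv_eq[where e=e and m=m and U=U and t=t and n=n and u=u and D=D, OF inj \<open>open U\<close> tU du critF[OF that], of 0] unfolding F_def by simp
  qed
  have hw: "p (int k + 1 - int i') + (\<Sum>j=1..n. F (int i' + int j) * D j t (axis (e k) 1)) = 0"
    if "i' \<in> {1..n}" for i'
    using deriv_eq[where e=e and m=m and U=U and t=t and n=n and u=u and D=D, OF inj \<open>open U\<close> tU du critF[OF that], of k] k unfolding F_def p_def by simp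
  from alg_main[where F=F and n=n and p=p and v="\<lambda>j. D j t (axis (e 0) 1)" and k=k and w="\<lambda>j. D j t (axis (e k) 1)", OF Fz Fn hv hw] i
  show "D i t (axis (e k) 1) = (\<Sum>j=1..n. toeplitzA n k (u t) i j * D j t (axis (e 0) 1))"
    unfolding toeplitzA_def p_def by simp
qed

end
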